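(* Let $E$ be a (Hausdorff, real) locally convex space with an $\omega^\omega$-base whose Hamel basis is uncountable. Then $E$ contains an infinite-dimensional metrizable compact subset.
   Context: A topological vector space $E$ has an $\omega^\omega$-base if there is a neighborhood base $\{U_\alpha:\alpha\in\omega^\omega\}$ at zero such that $U_\beta\subseteq U_\alpha$ whenever $\alpha\le\beta$, where $\omega^\omega$ is the set of all functions $\omega\to\omega$ ordered pointwise ($\alpha\le\beta$ iff $\alpha(n)\le\beta(n)$ for all $n$). A compact set is infinite-dimensional if its linear span is infinite-dimensional (equivalently here, it has infinite topological dimension). *)

theory Defs
  imports "HOL-Analysis.Analysis"
begin

definition real_tvs :: "'a::{real_vector,topological_space} itself \<Rightarrow> bool" where
  "real_tvs _ \<longleftrightarrow>
     continuous_on UNIV (\<lambda>p::'a \<times> 'a. fst p + snd p) \<and>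
     continuous_on UNIV (\<lambda>p::real \<times> 'a. fst p *\<^sub>R snd p)"

definition locally_convex :: "'a::{real_vector,topological_space} itself \<Rightarrow> bool" where
  "locally_convex _ \<longleftrightarrow>
     (\<forall>W::'a set. open W \<and> 0 \<in> W \<longrightarrow> (\<exists>V. open V \<and> convex V \<and> 0 \<in> V \<and> V \<subseteq> W))"

definition has_omega_omega_base :: "'a::{real_vector,topological_space} itself \<Rightarrow> bool" where
  "has_omega_omega_base _ \<longleftrightarrow>
     (\<exists>U :: (nat \<Rightarrow> nat) \<Rightarrow> 'a set.
        (\<forall>\<alpha>. 0 \<in> interior (U \<alpha>)) \<and>
        (\<forall>W. open W \<and> 0 \<in> W \<longrightarrow> (\<exists>\<alpha>. U \<alpha> \<subseteq> W)) \<and>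
        (\<forall>\<alpha> \<beta>. (\<forall>n. \<alpha> n \<le> \<beta> n) \<longrightarrow> U \<beta> \<subseteq> U \<alpha>))"

definition infinite_dimensional :: "'a::real_vector set \<Rightarrow> bool" where
  "infinite_dimensional K \<longleftrightarrow> \<not> (\<exists>B. finite B \<and> span K \<subseteq> span B)"

end

theory Submission
  imports Defs
begin

lemma homeomorphic_maps_iff_homeomorphism':
   "homeomorphic_maps (top_of_set S) (top_of_set T) f g \<longleftrightarrow> homeomorphism S T f g"
  by (force simp: Pi_iff homeomorphic_maps_def homeomorphism_def)

lemma homeomorphic_space_iff_homeomorphic':
   "(top_of_set S) homeomorphic_space (top_of_set T) \<longleftrightarrow> S homeomorphic T"
  by (simp add: homeomorphic_def homeomorphic_space_def homeomorphic_maps_iff_homeomorphism')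

lemma seq_metrizable:
  fixes x :: "nat \<Rightarrow> 'a::t2_space"
  assumes xl: "x \<longlonglongrightarrow> l" and xi: "inj x" and xn: "\<forall>j. x j \<noteq> l"
  shows "metrizable_space (top_of_set (insert l (range x)))"
proof -
  define r where "r j = inverse (real (Suc j))" for j
  have rlim: "r \<longlonglongrightarrow> 0" unfolding r_def by (rule LIMSEQ_inverse_real_of_nat)
  have rpos: "r j > 0" for j by (simp add: r_def)
  have rmono: "i \<le> j \<Longrightarrow> r j \<le> r i" for i j by (simp add: r_def le_imp_inverse_le)
  have rsmono: "i < j \<Longrightarrow> r j < r i" for i j by (simp add: r_def less_imp_inverse_less)
  have rinj: "inj r" by (auto simp: r_def inj_def)
  define L where "L = insert 0 (range r)"
  define h where "h y = (if y \<in> range r then x (inv r y) else l)" for y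
  have hr: "h (r j) = x j" for j using rinj by (simp add: h_def)
  have "0 \<notin> range r"
  proof
    assume "0 \<in> range r"
    then obtain j where "0 = r j" by blast
    with rpos[of j] show False by simp
  qed
  then have h0: "h 0 = l" by (simp add: h_def)
  have cL: "compact L" unfolding L_def by (rule compact_sequence_with_limit[OF rlim])
  have img: "h ` L = insert l (range x)" by (simp add: L_def image_image hr h0)
  have injh: "inj_on h L"
  proof (rule inj_onI)
    fix a b assume a: "a \<in> L" and b: "b \<in> L" and e: "h a = h b"
    have xn': "x j \<noteq> l" for j using xn by blast
    from a consider "a = 0" | i where "a = r i" unfolding L_def by blast
    then show "a = b"
    proof cases
      case 1
      from b consider "b = 0" | j where "b = r j" unfolding L_def by blast
      then show ?thesis
      proof cases
        case 1 then show ?thesis using \<open>a = 0\<close> by simp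
      next
        case (2 j) then have "x j = l" using e \<open>a = 0\<close> hr h0 by simp
        then show ?thesis using xn' by blast
      qed
    next
      case (2 i)
      from b consider "b = 0" | j where "b = r j" unfolding L_def by blast
      then show ?thesis
      proof cases
        case 1 then have "x i = l" using e \<open>a = r i\<close> hr h0 by simp
        then show ?thesis using xn' by blast
      next
        case (2 j) then have "x i = x j" using e \<open>a = r i\<close> hr by simp
        then have "i = j" using xi by (simp add: inj_eq)
        then show ?thesis using \<open>a = r i\<close> \<open>b = r j\<close> by simp
      qed
    qed
  qed
  have cont: "continuous_on L h"
    unfolding continuous_on_eq_continuous_within
  proof
    fix y assume "y \<in> L"
    then consider "y = 0" | j where "y = r j" by (auto simp: L_def)
    then show "continuous (at y within L) h"
    proof cases
      case 1
      show ?thesis unfolding continuous_within 1 h0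
      proof (rule topological_tendstoI)
        fix W assume W: "open W" "l \<in> W"
        then obtain J where J: "\<forall>j\<ge>J. x j \<in> W" using xl W unfolding tendsto_def eventually_sequentially by blast
        show "eventually (\<lambda>y. h y \<in> W) (at 0 within L)"
          unfolding eventually_at
        proof (intro exI[of _ "r J"] conjI ballI impI)
          show "r J > 0" by (rule rpos)
          fix y assume y: "y \<in> L" and d: "y \<noteq> 0 \<and> dist y 0 < r J"
          then obtain j where j: "y = r j" by (auto simp: L_def)
          have "J \<le> j" using d rmono[of j J] j rpos[of j] by (cases "J \<le> j") auto
          then show "h y \<in> W" using J j hr by auto
        qed
      qed
    next
      case 2
      define c where "c = (if j = 0 then 2 else inverse (real j))"
      have "\<not> y islimpt L"
        unfolding islimpt_def
      proof
        assume H: "\<forall>T. y \<in> T \<longrightarrow> open T \<longrightarrow> (\<exists>z\<in>L. z \<in> T \<and> z \<noteq> y)"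
        have "r j < c"
        proof (cases "j = 0")
          case True then show ?thesis by (simp add: c_def r_def)
        next
          case False then show ?thesis unfolding c_def r_def
            by (simp add: less_imp_inverse_less)
        qed
        then have yT: "y \<in> {r (Suc j)<..<c}" using 2 rsmono[of j "Suc j"] by auto
        have oT: "open {r (Suc j)<..<c}" by simp
        from H[rule_format, OF yT oT] obtain z where z: "z \<in> L" "z \<in> {r (Suc j)<..<c}" "z \<noteq> y" by blast
        show False
        proof (cases "z = 0")
          case True then show ?thesis using z rpos[of "Suc j"] by auto
        next
          case False
          then obtain i where i: "z = r i" using z by (auto simp: L_def)
          consider "i < j" | "i = j" | "j < i" by linarith
          then show ?thesis
          proof cases
            case 1
            then have "r i \<ge> inverse (real j)" unfolding r_def
              by (intro le_imp_inverse_le) auto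
            moreover have "c = inverse (real j)" using 1 by (simp add: c_def)
            moreover have "z < c" using z(2) by simp
            ultimately show ?thesis using i by simp
          next
            case 3 then show ?thesis using z i rmono[of "Suc j" i] by auto
          next
            case 2 then show ?thesis using z i \<open>y = r j\<close> by simp
          qed
        qed
      qed
      then show ?thesis by (simp add: continuous_trivial_limit trivial_limit_within)
    qed
  qed
  have "L homeomorphic (insert l (range x))"
    by (rule homeomorphic_compact[OF cL cont img injh])
  then have hs: "top_of_set L homeomorphic_space top_of_set (insert l (range x))"
    by (simp add: homeomorphic_space_iff_homeomorphic')
  have "metrizable_space (top_of_set L)"
    by (rule metrizable_space_subtopology[OF metrizable_space_euclidean])
  then show ?thesis using homeomorphic_metrizable_space[OF hs] by simp
qed


lemma comb_seq:
  fixes f :: "'b \<Rightarrow> nat \<Rightarrow> bool"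
  assumes unc: "uncountable B"
  shows "\<exists>b\<in>B. \<exists>g::nat \<Rightarrow> 'b. inj g \<and> range g \<subseteq> B \<and> (\<forall>n. \<exists>J. \<forall>j\<ge>J. f (g j) n = f b n)"
proof -
  define A where "A b j = {b'\<in>B. \<forall>i\<le>j. f b' i = f b i}" for b j
  have "\<exists>b\<in>B. \<forall>j. infinite (A b j)"
  proof (rule ccontr)
    assume "\<not> (\<exists>b\<in>B. \<forall>j. infinite (A b j))"
    then have "\<forall>b\<in>B. \<exists>j. finite (A b j)" by blast
    then obtain J where J: "\<forall>b\<in>B. finite (A b (J b))" by metis
    define \<phi> where "\<phi> b = (J b, map (f b) [0..<Suc (J b)])" for b
    have fib: "finite {b'\<in>B. \<phi> b' = v}" for v
    proof (cases "\<exists>b\<in>B. \<phi> b = v")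
      case True
      then obtain b where b: "b \<in> B" "\<phi> b = v" by blast
      have "{b'\<in>B. \<phi> b' = v} \<subseteq> A b (J b)"
      proof
        fix b' assume b': "b' \<in> {b'\<in>B. \<phi> b' = v}"
        then have jj: "J b' = J b" and mm: "map (f b') [0..<Suc (J b)] = map (f b) [0..<Suc (J b)]"
          using b by (auto simp: \<phi>_def)
        have "f b' i = f b i" if "i \<le> J b" for i
        proof -
          have "\<forall>x\<in>set [0..<Suc (J b)]. f b' x = f b x" using mm by (simp only: map_eq_conv)
          moreover have "i \<in> set [0..<Suc (J b)]" using that by (simp del: upt_Suc)
          ultimately show ?thesis by blast
        qed
        then show "b' \<in> A b (J b)" using b' by (auto simp: A_def)
      qed
      then show ?thesis using J b(1) finite_subset by blast
    next
      case False
      then have "{b'\<in>B. \<phi> b' = v} = {}" by auto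
      then show ?thesis by (metis finite.emptyI)
    qed
    have "B = (\<Union>v\<in>\<phi>`B. {b'\<in>B. \<phi> b' = v})" by auto
    moreover have "countable (\<Union>v\<in>\<phi>`B. {b'\<in>B. \<phi> b' = v})"
      by (intro countable_UN countableI_type countable_finite fib)
    ultimately show False using unc by simp
  qed
  then obtain b where b: "b \<in> B" "\<forall>j. infinite (A b j)" by blast
  define pick where "pick j l = (SOME x. x \<in> A b j \<and> x \<notin> set l)" for j l
  have pickP: "pick j l \<in> A b j \<and> pick j l \<notin> set l" for j l
  proof -
    have "infinite (A b j - set l)" using b(2) by (simp add: Diff_infinite_finite)
    then have "\<exists>x. x \<in> A b j \<and> x \<notin> set l"
      by (metis Diff_iff finite.emptyI ex_in_conv)
    then show ?thesis unfolding pick_def by (rule someI_ex)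
  qed
  define L where "L = rec_nat [] (\<lambda>j l. l @ [pick j l])"
  have L0: "L 0 = []" by (simp add: L_def)
  have LS: "L (Suc j) = L j @ [pick j (L j)]" for j by (simp add: L_def)
  define g where "g j = pick j (L j)" for j
  have len: "length (L j) = j" for j by (induction j) (simp_all add: L0 LS)
  have Lnth: "i < j \<Longrightarrow> L j ! i = g i" for i j
  proof (induction j)
    case 0 then show ?case by simp
  next
    case (Suc j)
    show ?case
    proof (cases "i < j")
      case True then show ?thesis using Suc by (simp add: LS nth_append len)
    next
      case False then have "i = j" using Suc.prems by simp
      then show ?thesis by (simp add: LS nth_append len g_def)
    qed
  qed
  have setL: "i < j \<Longrightarrow> g i \<in> set (L j)" for i j
    using Lnth len by (metis nth_mem)
  have gA: "g j \<in> A b j" for j using pickP by (simp add: g_def)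
  have gnot: "g j \<notin> set (L j)" for j using pickP by (simp add: g_def)
  have inj: "inj g"
  proof (rule injI)
    fix i j assume e: "g i = g j"
    show "i = j"
    proof (rule ccontr)
      assume "i \<noteq> j"
      then consider "i < j" | "j < i" by linarith
      then show False
      proof cases
        case 1 then show False using setL[of i j] gnot[of j] e by simp
      next
        case 2 then show False using setL[of j i] gnot[of i] e by simp
      qed
    qed
  qed
  have "range g \<subseteq> B" using gA by (auto simp: A_def)
  moreover have "\<forall>n. \<exists>J. \<forall>j\<ge>J. f (g j) n = f b n"
  proof
    fix n show "\<exists>J. \<forall>j\<ge>J. f (g j) n = f b n"
      by (rule exI[of _ n]) (use gA in \<open>auto simp: A_def\<close>)
  qed
  ultimately show ?thesis using b(1) inj by blast
qed


theorem theorem1p2: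
  assumes "real_tvs TYPE('a::{real_vector,t2_space})"
    and "locally_convex TYPE('a)"
    and "has_omega_omega_base TYPE('a)"
    and "\<exists>B::'a set. independent B \<and> span B = UNIV \<and> uncountable B"
  shows "\<exists>K::'a set. compact K \<and> metrizable_space (subtopology euclidean K) \<and> infinite_dimensional K"
proof -
  from assms(3)[unfolded has_omega_omega_base_def] obtain U :: "(nat \<Rightarrow> nat) \<Rightarrow> 'a set" where
    UU: "(\<forall>\<alpha>. 0 \<in> interior (U \<alpha>)) \<and> (\<forall>W. open W \<and> 0 \<in> W \<longrightarrow> (\<exists>\<alpha>. U \<alpha> \<subseteq> W))
    \<and> (\<forall>\<alpha> \<beta>. (\<forall>n. \<alpha> n \<le> \<beta> n) \<longrightarrow> U \<beta> \<subseteq> U \<alpha>)"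
    by (elim exE)
  have U0: "\<forall>\<alpha>. 0 \<in> interior (U \<alpha>)" using UU by (rule conjunct1)
  have Ub: "\<forall>W. open W \<and> 0 \<in> W \<longrightarrow> (\<exists>\<alpha>. U \<alpha> \<subseteq> W)" using UU by (rule conjunct1[OF conjunct2])
  have Um: "\<forall>\<alpha> \<beta>. (\<forall>n. \<alpha> n \<le> \<beta> n) \<longrightarrow> U \<beta> \<subseteq> U \<alpha>" using UU by (rule conjunct2[OF conjunct2])
  from assms(4) obtain B :: "'a set" where B0: "independent B \<and> span B = UNIV \<and> uncountable B" by (elim exE)
  have B: "independent B" "uncountable B" using B0 by simp_all
  have lc: "\<forall>W::'a set. open W \<and> 0 \<in> W \<longrightarrow> (\<exists>V. open V \<and> convex V \<and> 0 \<in> V \<and> V \<subseteq> W)"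
    using assms(2) unfolding locally_convex_def by blast
  have smc: "continuous_on UNIV (\<lambda>p::real \<times> 'a. fst p *\<^sub>R snd p)"
    using assms(1) unfolding real_tvs_def by blast
  define V where "V \<alpha> = {x. \<forall>t\<in>{0..1::real}. t *\<^sub>R x \<in> U \<alpha>}" for \<alpha>
  have VU: "V \<alpha> \<subseteq> U \<alpha>" for \<alpha>
  proof
    fix x assume "x \<in> V \<alpha>"
    then have H: "\<forall>t\<in>{0..1::real}. t *\<^sub>R x \<in> U \<alpha>" by (simp add: V_def)
    have "(1::real) \<in> {0..1}" by simp
    from bspec[OF H this] show "x \<in> U \<alpha>" by simp
  qed
  have Vm: "(\<forall>n. \<alpha> n \<le> \<beta> n) \<Longrightarrow> V \<beta> \<subseteq> V \<alpha>" for \<alpha> \<beta>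
    using Um unfolding V_def by blast
  have V0: "0 \<in> interior (V \<alpha>)" for \<alpha>
  proof -
    have "open (interior (U \<alpha>)) \<and> 0 \<in> interior (U \<alpha>)" using U0 by simp
    then obtain W where W: "open W" "convex W" "0 \<in> W" "W \<subseteq> interior (U \<alpha>)" using lc by blast
    have "W \<subseteq> V \<alpha>"
    proof
      fix x assume x: "x \<in> W"
      have "t *\<^sub>R x \<in> U \<alpha>" if t: "t \<in> {0..1}" for t
      proof -
        have "t *\<^sub>R x + (1 - t) *\<^sub>R 0 \<in> W"
          using convexD[OF W(2) x W(3), of t "1 - t"] t by simp
        then show ?thesis using W(4) interior_subset by auto
      qed
      then show "x \<in> V \<alpha>" by (simp add: V_def)
    qed
    then show ?thesis using W by (meson interior_maximal subsetD)
  qed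
  have Vstar: "c *\<^sub>R x \<in> V \<alpha>" if "x \<in> V \<alpha>" "c \<in> {0..1}" for x c \<alpha>
  proof -
    have "t *\<^sub>R (c *\<^sub>R x) \<in> U \<alpha>" if t: "t \<in> {0..1}" for t
    proof -
      have "t * c \<in> {0..1}" using t \<open>c \<in> {0..1}\<close> by (auto intro: mult_le_one)
      then have "(t * c) *\<^sub>R x \<in> U \<alpha>" using \<open>x \<in> V \<alpha>\<close> by (simp add: V_def)
      then show ?thesis by simp
    qed
    then show ?thesis by (simp add: V_def)
  qed
  define D where "D s = (\<Inter>\<beta>\<in>{\<beta>. \<forall>i<length s. \<beta> i = s ! i}. V \<beta>)" for s :: "nat list"
  have Dstar: "c *\<^sub>R x \<in> D s" if "x \<in> D s" "c \<in> {0..1}" for x c s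
    using that Vstar unfolding D_def by blast
  define S where "S b = {s. \<exists>t>0. t *\<^sub>R b \<in> D s}" for b
  have cont_b: "((\<lambda>k. inverse (real (Suc k)) *\<^sub>R b) \<longlongrightarrow> 0) sequentially" for b :: 'a
  proof -
    have c1: "continuous_on UNIV (\<lambda>t::real. (t, b))"
      by (intro continuous_intros)
    have "continuous_on UNIV (\<lambda>t::real. fst (t, b) *\<^sub>R snd (t, b))"
      by (rule continuous_on_compose2[OF smc c1]) simp
    then have c2: "continuous_on UNIV (\<lambda>t::real. t *\<^sub>R b)" by simp
    have "((\<lambda>k. inverse (real (Suc k)) *\<^sub>R b) \<longlongrightarrow> 0 *\<^sub>R b) sequentially"
      using continuous_on_tendsto_compose[OF c2 LIMSEQ_inverse_real_of_nat] by (simp add: o_def)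
    then show ?thesis by simp
  qed
  have lemB: "\<exists>k. map \<alpha> [0..<k] \<in> S b" for \<alpha> b
  proof (rule ccontr)
    assume nk: "\<not> (\<exists>k. map \<alpha> [0..<k] \<in> S b)"
    have "\<exists>\<beta>. (\<forall>i<k. \<beta> i = \<alpha> i) \<and> inverse (real (Suc k)) *\<^sub>R b \<notin> V \<beta>" for k
    proof (rule ccontr)
      assume "\<not> ?thesis"
      then have "inverse (real (Suc k)) *\<^sub>R b \<in> D (map \<alpha> [0..<k])"
        unfolding D_def by auto
      then have "map \<alpha> [0..<k] \<in> S b" unfolding S_def
        by (intro CollectI exI[of _ "inverse (real (Suc k))"]) simp
      then show False using nk by blast
    qed
    then obtain \<beta>k where \<beta>k: "\<And>k. (\<forall>i<k. \<beta>k k i = \<alpha> i) \<and> inverse (real (Suc k)) *\<^sub>R b \<notin> V (\<beta>k k)"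
      by metis
    define \<beta> where "\<beta> j = (\<Sum>k\<le>j. \<beta>k k j) + \<alpha> j" for j
    have le: "\<beta>k k n \<le> \<beta> n" for k n
    proof (cases "k \<le> n")
      case True
      then have "\<beta>k k n \<le> (\<Sum>k\<le>n. \<beta>k k n)"
        by (intro member_le_sum) auto
      then show ?thesis by (simp add: \<beta>_def)
    next
      case False
      then have "\<beta>k k n = \<alpha> n" using \<beta>k[of k] by simp
      then show ?thesis by (simp add: \<beta>_def)
    qed
    have nin: "inverse (real (Suc k)) *\<^sub>R b \<notin> interior (V \<beta>)" for k
      using Vm[of "\<beta>k k" \<beta>] le \<beta>k[of k] interior_subset by blast
    have "eventually (\<lambda>k. inverse (real (Suc k)) *\<^sub>R b \<in> interior (V \<beta>)) sequentially"
      using cont_b[of b] V0[of \<beta>] open_interior unfolding tendsto_def by blast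
    then obtain N where "\<forall>k\<ge>N. inverse (real (Suc k)) *\<^sub>R b \<in> interior (V \<beta>)"
      unfolding eventually_sequentially by blast
    then show False using nin[of N] by blast
  qed
  obtain bs and g :: "nat \<Rightarrow> 'a" where bs: "bs \<in> B" and g: "inj g" "range g \<subseteq> B"
    and gconv: "\<forall>n. \<exists>J. \<forall>j\<ge>J. ((from_nat n :: nat list) \<in> S (g j)) = ((from_nat n :: nat list) \<in> S bs)"
    using comb_seq[OF B(2), of "\<lambda>b n. (from_nat n :: nat list) \<in> S b"] by blast
  define I where "I j = {i. i \<le> j \<and> (from_nat i :: nat list) \<in> S (g j)}" for j
  have "\<forall>j. \<forall>i\<in>I j. \<exists>t>0. t *\<^sub>R g j \<in> D (from_nat i)" by (auto simp: I_def S_def)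
  then obtain \<tau> where \<tau>: "\<And>j i. i \<in> I j \<Longrightarrow> \<tau> j i > 0 \<and> \<tau> j i *\<^sub>R g j \<in> D (from_nat i)"
    by metis
  define t where "t j = Min (insert 1 (\<tau> j ` I j))" for j
  have finI: "finite (I j)" for j
    by (rule finite_subset[of _ "{..j}"]) (auto simp: I_def)
  have tpos: "t j > 0" for j
    unfolding t_def using finI \<tau> by (subst Min_gr_iff) auto
  have tle: "t j \<le> \<tau> j i" if "i \<in> I j" for i j
    unfolding t_def using finI that by (intro Min_le) auto
  define x where "x j = t j *\<^sub>R g j" for j
  have xD: "x j \<in> D (from_nat i)" if i: "i \<in> I j" for i j
  proof -
    have tp: "\<tau> j i > 0" using \<tau>[OF i] by blast
    have "(t j / \<tau> j i) *\<^sub>R (\<tau> j i *\<^sub>R g j) \<in> D (from_nat i)"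
      using Dstar[of "\<tau> j i *\<^sub>R g j" "from_nat i" "t j / \<tau> j i"] \<tau>[OF i] tpos[of j] tle[OF i] tp
      by simp
    moreover have "(t j / \<tau> j i) *\<^sub>R (\<tau> j i *\<^sub>R g j) = x j" using tp by (simp add: x_def)
    ultimately show ?thesis by simp
  qed
  have xlim: "x \<longlonglongrightarrow> 0"
  proof (rule topological_tendstoI)
    fix W :: "'a set" assume W: "open W" "0 \<in> W"
    obtain \<alpha> where \<alpha>: "U \<alpha> \<subseteq> W" using Ub W by blast
    obtain k where k: "map \<alpha> [0..<k] \<in> S bs" using lemB by blast
    define n where "n = to_nat (map \<alpha> [0..<k])"
    have fn: "(from_nat n :: nat list) = map \<alpha> [0..<k]" by (simp add: n_def)
    obtain J where J: "\<forall>j\<ge>J. ((from_nat n :: nat list) \<in> S (g j)) = ((from_nat n :: nat list) \<in> S bs)"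
      using gconv by blast
    have "x j \<in> W" if j: "j \<ge> max J n" for j
    proof -
      have "n \<in> I j" using J j k fn by (auto simp: I_def)
      then have "x j \<in> D (map \<alpha> [0..<k])" using xD fn by metis
      then have "x j \<in> V \<alpha>" unfolding D_def by auto
      then show ?thesis using VU \<alpha> by blast
    qed
    then show "eventually (\<lambda>j. x j \<in> W) sequentially" unfolding eventually_sequentially by blast
  qed
  have g0: "g j \<noteq> 0" for j
    using g(2) B(1) dependent_zero by (metis independent_mono range_subsetD)
  have tnz: "t j \<noteq> 0" for j using tpos[of j] by simp
  have xnz: "\<forall>j. x j \<noteq> 0" using g0 tnz by (simp add: x_def)
  have xinj: "inj x"
  proof (rule injI)
    fix i j assume e: "x i = x j"
    show "i = j"
    proof (rule ccontr)
      assume ij: "i \<noteq> j"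
      then have gij: "g i \<noteq> g j" using g(1) by (simp add: inj_eq)
      have "g i = inverse (t i) *\<^sub>R (t i *\<^sub>R g i)" using tnz[of i] by simp
      also have "\<dots> = inverse (t i) *\<^sub>R (t j *\<^sub>R g j)" using e by (simp add: x_def)
      also have "\<dots> = (t j / t i) *\<^sub>R g j" by (simp add: divide_inverse mult.commute)
      finally have "g i = (t j / t i) *\<^sub>R g j" .
      then have "g i \<in> span (B - {g i})"
        using gij g(2) by (metis DiffI range_subsetD singletonD span_base span_scale)
      moreover have "g i \<in> B" using g(2) by blast
      ultimately have "dependent B" unfolding dependent_def by blast
      then show False using B(1) by simp
    qed
  qed
  define K where "K = insert 0 (range x)"
  have "compact K"
  proof -
    have "compactin euclidean (insert 0 (range x))"
      by (rule compactin_sequence_with_limit) (use xlim in auto)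
    then show ?thesis by (simp add: K_def)
  qed
  moreover have "metrizable_space (subtopology euclidean K)"
    unfolding K_def by (rule seq_metrizable[OF xlim xinj xnz])
  moreover have "infinite_dimensional K"
    unfolding infinite_dimensional_def
  proof
    assume "\<exists>F. finite F \<and> span K \<subseteq> span F"
    then obtain F where F: "finite F" "span K \<subseteq> span F" by blast
    have "g j \<in> span K" for j
    proof -
      have "x j \<in> span K" by (simp add: K_def span_base)
      then have "inverse (t j) *\<^sub>R x j \<in> span K" by (rule span_scale)
      then show ?thesis using tnz[of j] by (simp add: x_def)
    qed
    then have "range g \<subseteq> span F" using F(2) by blast
    moreover have "independent (range g)" using B(1) g(2) independent_mono by blast
    ultimately have "finite (range g)" using independent_span_bound[OF F(1)] by blast
    then show False using range_inj_infinite[OF g(1)] by simp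
  qed
  ultimately show ?thesis by blast
qed

end
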